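(* Let $\mathbf{X}=\{X_n\}_{n\ge0}$ be a real-valued integrable process adapted to a filtration $\{\mathcal{F}_n\}_{n\ge0}$ satisfying (D1), (D4), (A3) and (A4). Then $X_n$ possesses a finite limit a.e. If in addition $\mathbf{X}$ satisfies (D2), then $X_n\to0$ a.e.
   Context: Residuals: $\epsilon_n=X_n-E[X_n\mid\mathcal{F}_{n-1}]$, $n\ge1$; $M_{1,n}=\sum_{i=1}^n\epsilon_i$. $U_n=E[X_n\mid\mathcal{F}_{n-1}]\,I\{X_{n-1}=0\}$. (D1) For every $\delta>0$ there are constants $\alpha_n(\delta)\ge0$ with $\sum_n\alpha_n(\delta)<\infty$ such that, a.e. on $\{|X_{n-1}|>\delta\}$, $0\le E[X_n\mid\mathcal{F}_{n-1}]/X_{n-1}\le1+\alpha_n(\delta)$, for all $n\ge1$. (D2) For every pair $0<\delta_1<\delta_2<\infty$ there are constants $0\le k_n\le1$ (depending on $\delta_1,\delta_2$) with $\sum_n(1-k_n)=\infty$ such that, a.e. on $\{|X_{n-1}|\in(\delta_1,\delta_2)\}$, $0\le E[X_n\mid\mathcal{F}_{n-1}]/X_{n-1}\le k_n$, for all $n\ge1$. (D4) For every $\delta>0$ there is a constant $\kappa_\delta<\infty$ such that $|E[X_n\mid\mathcal{F}_{n-1}]|\le\kappa_\delta$ a.e. on $\{|X_{n-1}|\in(0,\delta]\}$ for all $n\ge1$, and $\lim_{\delta\downarrow0}\kappa_\delta=0$. (A3) $\lim_n U_n=0$ a.e. (A4) $M_{1,n}$ possesses a finite limit a.e. *)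

theory Defs
  imports "HOL-Probability.Probability"
begin

text \<open>Conditional mean E[X_{n+1} | F_n] (a version of it); index shifted by one
  relative to the paper: cmean M F X n corresponds to E[X_{n+1} | F_n].\<close>
definition cmean :: "'a measure \<Rightarrow> (nat \<Rightarrow> 'a measure) \<Rightarrow> (nat \<Rightarrow> 'a \<Rightarrow> real) \<Rightarrow> nat \<Rightarrow> 'a \<Rightarrow> real" where
  "cmean M F X n = real_cond_exp M (F n) (X (Suc n))"

definition resid :: "'a measure \<Rightarrow> (nat \<Rightarrow> 'a measure) \<Rightarrow> (nat \<Rightarrow> 'a \<Rightarrow> real) \<Rightarrow> nat \<Rightarrow> 'a \<Rightarrow> real" where
  "resid M F X n \<omega> = X (Suc n) \<omega> - cmean M F X n \<omega>"

definition Uproc :: "'a measure \<Rightarrow> (nat \<Rightarrow> 'a measure) \<Rightarrow> (nat \<Rightarrow> 'a \<Rightarrow> real) \<Rightarrow> nat \<Rightarrow> 'a \<Rightarrow> real" where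
  "Uproc M F X n \<omega> = cmean M F X n \<omega> * (if X n \<omega> = 0 then 1 else 0)"

definition condD1 :: "'a measure \<Rightarrow> (nat \<Rightarrow> 'a measure) \<Rightarrow> (nat \<Rightarrow> 'a \<Rightarrow> real) \<Rightarrow> bool" where
  "condD1 M F X \<longleftrightarrow> (\<forall>\<delta>>0. \<exists>\<alpha>::nat \<Rightarrow> real. (\<forall>n. \<alpha> n \<ge> 0) \<and> summable \<alpha> \<and>
     (\<forall>n. AE \<omega> in M. \<bar>X n \<omega>\<bar> > \<delta> \<longrightarrow>
        0 \<le> cmean M F X n \<omega> / X n \<omega> \<and> cmean M F X n \<omega> / X n \<omega> \<le> 1 + \<alpha> (Suc n)))"

definition condD2 :: "'a measure \<Rightarrow> (nat \<Rightarrow> 'a measure) \<Rightarrow> (nat \<Rightarrow> 'a \<Rightarrow> real) \<Rightarrow> bool" where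
  "condD2 M F X \<longleftrightarrow> (\<forall>\<delta>1 \<delta>2::real. 0 < \<delta>1 \<and> \<delta>1 < \<delta>2 \<longrightarrow>
     (\<exists>k::nat \<Rightarrow> real. (\<forall>n. 0 \<le> k n \<and> k n \<le> 1) \<and> \<not> summable (\<lambda>n. 1 - k n) \<and>
       (\<forall>n. AE \<omega> in M. \<delta>1 < \<bar>X n \<omega>\<bar> \<and> \<bar>X n \<omega>\<bar> < \<delta>2 \<longrightarrow>
          0 \<le> cmean M F X n \<omega> / X n \<omega> \<and> cmean M F X n \<omega> / X n \<omega> \<le> k (Suc n))))"

definition condD4 :: "'a measure \<Rightarrow> (nat \<Rightarrow> 'a measure) \<Rightarrow> (nat \<Rightarrow> 'a \<Rightarrow> real) \<Rightarrow> bool" where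
  "condD4 M F X \<longleftrightarrow> (\<exists>\<kappa>::real \<Rightarrow> real. (\<kappa> \<longlongrightarrow> 0) (at_right 0) \<and>
     (\<forall>\<delta>>0. \<forall>n. AE \<omega> in M. 0 < \<bar>X n \<omega>\<bar> \<and> \<bar>X n \<omega>\<bar> \<le> \<delta> \<longrightarrow> \<bar>cmean M F X n \<omega>\<bar> \<le> \<kappa> \<delta>))"

definition condA3 :: "'a measure \<Rightarrow> (nat \<Rightarrow> 'a measure) \<Rightarrow> (nat \<Rightarrow> 'a \<Rightarrow> real) \<Rightarrow> bool" where
  "condA3 M F X \<longleftrightarrow> (AE \<omega> in M. (\<lambda>n. Uproc M F X n \<omega>) \<longlonglongrightarrow> 0)"

definition condA4 :: "'a measure \<Rightarrow> (nat \<Rightarrow> 'a measure) \<Rightarrow> (nat \<Rightarrow> 'a \<Rightarrow> real) \<Rightarrow> bool" where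
  "condA4 M F X \<longleftrightarrow> (AE \<omega> in M. convergent (\<lambda>n. \<Sum>i<n. resid M F X i \<omega>))"

end

theory Submission
  imports Defs
begin

lemma step_bound:
  fixes t a y r \<eta> :: real
  assumes "0 \<le> t" "t \<le> 1 + a" "\<bar>r\<bar> \<le> \<eta>" "0 \<le> a"
  shows "\<bar>t*(y - r) + r\<bar> + \<eta> \<le> max (2*\<eta>) ((1+a)*(\<bar>y\<bar>+\<eta>))"
proof -
  have e: "t*(y - r) + r = t*y + (1-t)*r" by algebra
  have "\<bar>t*y\<bar> = t*\<bar>y\<bar>" using assms by (simp add: abs_mult)
  moreover have "\<bar>(1-t)*r\<bar> \<le> \<bar>1-t\<bar>*\<eta>" using assms by (simp add: abs_mult mult_left_mono)
  ultimately have h: "\<bar>t*(y - r) + r\<bar> \<le> t*\<bar>y\<bar> + \<bar>1-t\<bar>*\<eta>" unfolding e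
    by (smt (verit) abs_triangle_ineq)
  show ?thesis
  proof (cases "t \<le> 1")
    case True
    then have "\<bar>t*(y - r) + r\<bar> + \<eta> \<le> t*(\<bar>y\<bar>+\<eta>) + (1-t)*(2*\<eta>)" using h by (simp add: algebra_simps)
    also have "\<dots> \<le> t*max (2*\<eta>) ((1+a)*(\<bar>y\<bar>+\<eta>)) + (1-t)*max (2*\<eta>) ((1+a)*(\<bar>y\<bar>+\<eta>))"
    proof (intro add_mono mult_left_mono)
      have "\<bar>y\<bar>+\<eta> \<le> (1+a)*(\<bar>y\<bar>+\<eta>)" using assms
        by (smt (verit) abs_ge_zero mult_le_cancel_right1)
      then show "\<bar>y\<bar> + \<eta> \<le> max (2 * \<eta>) ((1 + a) * (\<bar>y\<bar> + \<eta>))" by linarith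
    qed (use True assms in auto)
    finally show ?thesis by (simp add: algebra_simps)
  next
    case False
    then have "\<bar>t*(y - r) + r\<bar> + \<eta> \<le> t*(\<bar>y\<bar>+\<eta>)" using h by (simp add: algebra_simps)
    also have "\<dots> \<le> (1+a)*(\<bar>y\<bar>+\<eta>)" using assms
      by (intro mult_right_mono) auto
    finally show ?thesis by simp
  qed
qed

lemma side:
  fixes x c r T \<alpha> :: "nat \<Rightarrow> real"
  assumes rec: "\<And>n. x (Suc n) + r (Suc n) = c n + r n"
    and rb: "\<And>n. n \<ge> N \<Longrightarrow> \<bar>r n\<bar> \<le> \<eta>"
    and Trec: "\<And>n. T n = \<alpha> (Suc n) + T (Suc n)"
    and Tb: "\<And>n. n \<ge> N \<Longrightarrow> 0 \<le> K * T n \<and> K * T n \<le> \<eta>"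
    and Tlim: "T \<longlonglongrightarrow> 0"
    and hpos: "\<And>n. n \<ge> N \<Longrightarrow> x n > \<eta> \<Longrightarrow> 0 \<le> c n \<and> c n \<le> x n + K * \<alpha> (Suc n)"
    and noinv: "\<And>n. n \<ge> N \<Longrightarrow> \<not> (x n + r n + K * T n \<le> 3*\<eta> \<and> x n + r n - K * T n \<ge> -3*\<eta>)"
    and start: "x N + r N + K * T N > 3*\<eta>"
  shows "convergent (\<lambda>n. x n + r n)"
proof -
  define v where "v n = x n + r n + K * T n" for n
  have key: "v (Suc n) \<le> v n \<and> v (Suc n) > 3*\<eta>" if "n \<ge> N" "v n > 3*\<eta>" for n
  proof -
    have "x n > \<eta>" using that rb[of n] Tb[of n] unfolding v_def by linarith
    from hpos[OF that(1) this] have hc: "0 \<le> c n" "c n \<le> x n + K * \<alpha> (Suc n)" by auto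
    have "v (Suc n) = c n + r n + K * T (Suc n)" unfolding v_def using rec[of n] by simp
    also have "\<dots> \<le> v n" unfolding v_def using hc Trec[of n] by (simp add: algebra_simps)
    finally have 1: "v (Suc n) \<le> v n" .
    have "x (Suc n) + r (Suc n) - K * T (Suc n) \<ge> -3*\<eta>"
      using rec[of n] hc rb[of n] Tb[of "Suc n"] that by (simp add: abs_le_iff)
    then have "v (Suc n) > 3*\<eta>" using noinv[of "Suc n"] that unfolding v_def by auto
    with 1 show ?thesis by simp
  qed
  have all: "v (N + k) > 3*\<eta>" for k
    by (induction k) (use start key in \<open>auto simp: v_def\<close>)
  have dec: "decseq (\<lambda>k. v (k + N))"
    by (rule decseq_SucI) (use key all in \<open>simp add: add.commute\<close>)
  obtain L where L: "(\<lambda>k. v (k + N)) \<longlonglongrightarrow> L"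
    using decseq_convergent[OF dec, of "3*\<eta>"] all by (metis add.commute less_imp_le)
  have "(\<lambda>k. v (k + N) - K * T (k + N)) \<longlonglongrightarrow> L - K * 0"
    by (intro tendsto_intros L LIMSEQ_ignore_initial_segment Tlim)
  then have "(\<lambda>k. x (k + N) + r (k + N)) \<longlonglongrightarrow> L" by (simp add: v_def)
  then show ?thesis using convergent_ignore_initial_segment convergent_def by blast
qed

lemma ratio_pos:
  fixes x c b :: real
  assumes "x > 0" "0 \<le> c / x" "c / x \<le> b"
  shows "0 \<le> c \<and> c \<le> b * x"
proof -
  have "c = (c/x) * x" using assms by simp
  then show ?thesis using assms by (metis mult_nonneg_nonneg mult_right_mono less_imp_le)
qed

lemma ratio_neg:
  fixes x c b :: real
  assumes "x < 0" "0 \<le> c / x" "c / x \<le> b"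
  shows "0 \<le> - c \<and> - c \<le> b * (- x)"
  using ratio_pos[of "-x" "-c" b] assms by simp

lemma det_conv:
  fixes x c :: "nat \<Rightarrow> real" and \<alpha> :: "nat \<Rightarrow> nat \<Rightarrow> real" and \<kappa> :: "real \<Rightarrow> real"
  assumes A4: "convergent (\<lambda>n. \<Sum>i<n. x (Suc i) - c i)"
    and D1a: "\<And>m n. \<alpha> m n \<ge> 0" and D1b: "\<And>m. summable (\<alpha> m)"
    and D1c: "\<And>m n. \<bar>x n\<bar> > inverse (real (Suc m)) \<Longrightarrow> 0 \<le> c n / x n \<and> c n / x n \<le> 1 + \<alpha> m (Suc n)"
    and kap: "(\<kappa> \<longlongrightarrow> 0) (at_right 0)"
    and D4: "\<And>m n. 0 < \<bar>x n\<bar> \<Longrightarrow> \<bar>x n\<bar> \<le> inverse (real (Suc m)) \<Longrightarrow> \<bar>c n\<bar> \<le> \<kappa> (inverse (real (Suc m)))"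
    and A3: "(\<lambda>n. c n * (if x n = 0 then 1 else 0)) \<longlonglongrightarrow> 0"
  shows "convergent x"
proof -
  define e where "e i = x (Suc i) - c i" for i
  define S where "S = lim (\<lambda>n. \<Sum>i<n. e i)"
  have Slim: "(\<lambda>n. \<Sum>i<n. e i) \<longlonglongrightarrow> S" using A4 convergent_LIMSEQ_iff unfolding S_def e_def by blast
  define r where "r n = S - (\<Sum>i<n. e i)" for n
  have rlim: "r \<longlonglongrightarrow> 0"
  proof -
    have "(\<lambda>n. S - (\<Sum>i<n. e i)) \<longlonglongrightarrow> S - S" by (intro tendsto_intros Slim)
    then show ?thesis unfolding r_def by simp
  qed
  have rec: "x (Suc n) + r (Suc n) = c n + r n" for n
    by (simp add: r_def e_def)
  define y where "y n = x n + r n" for n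
  have "Bseq r" using rlim convergent_imp_Bseq convergent_def by blast
  then obtain \<eta> where \<eta>0: "\<eta> > 0" "\<forall>n. norm (r n) \<le> \<eta>" by (rule BseqE)
  then have \<eta>: "\<eta> > 0" "\<And>n. \<bar>r n\<bar> \<le> \<eta>" by auto
  have "Bseq (\<lambda>n. c n * (if x n = 0 then 1 else 0))" using A3 convergent_imp_Bseq convergent_def by blast
  then obtain B3 where "B3 > 0" "\<forall>n. norm (c n * (if x n = 0 then 1 else 0)) \<le> B3" by (rule BseqE)
  then have B3: "\<And>n. \<bar>c n * (if x n = 0 then 1 else 0)\<bar> \<le> B3" by auto
  define K0 where "K0 = max B3 \<bar>\<kappa> 1\<bar>"
  have c_small: "\<bar>c n\<bar> \<le> K0" if "\<bar>x n\<bar> \<le> 1" for n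
  proof (cases "x n = 0")
    case True then show ?thesis using B3[of n] by (simp add: K0_def)
  next
    case False then show ?thesis using D4[of n 0] that by (simp add: K0_def)
  qed
  define a where "a n = \<alpha> 0 n" for n
  define Q where "Q n = (\<Prod>i<n. 1 + a (Suc i))" for n
  define C where "C = max (2*\<eta>) (max (K0 + 2*\<eta>) (\<bar>y 0\<bar> + \<eta>))"
  have a0: "a n \<ge> 0" for n using D1a by (simp add: a_def)
  have Q1: "Q n \<ge> 1" for n unfolding Q_def by (rule prod_ge_1) (use a0 in auto)
  have C0: "C \<ge> 0" using \<eta> by (simp add: C_def)
  have yb: "\<bar>y n\<bar> + \<eta> \<le> C * Q n" for n
  proof (induction n)
    case 0 then show ?case by (simp add: Q_def C_def)
  next
    case (Suc n)
    have QS: "Q (Suc n) = Q n * (1 + a (Suc n))" by (simp add: Q_def)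
    have CQ: "C \<le> C * Q (Suc n)" using C0 Q1[of "Suc n"] by (simp add: mult_le_cancel_left1)
    show ?case
    proof (cases "\<bar>x n\<bar> \<le> 1")
      case True
      have "\<bar>y (Suc n)\<bar> \<le> K0 + \<eta>" using c_small[OF True] \<eta>(2)[of n] rec[of n] unfolding y_def by linarith
      then show ?thesis using CQ by (simp add: C_def)
    next
      case False
      then have xn: "x n \<noteq> 0" by auto
      define t where "t = c n / x n"
      have t: "0 \<le> t" "t \<le> 1 + a (Suc n)" using D1c[of 0 n] False by (auto simp: t_def a_def)
      have "y (Suc n) = t * (y n - r n) + r n" using rec[of n] xn by (simp add: y_def t_def)
      then have "\<bar>y (Suc n)\<bar> + \<eta> \<le> max (2*\<eta>) ((1 + a (Suc n))*(\<bar>y n\<bar>+\<eta>))"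
        using step_bound[OF t \<eta>(2)[of n] a0] by simp
      also have "\<dots> \<le> max C ((1 + a (Suc n))*(C * Q n))"
        using Suc.IH a0[of "Suc n"] by (intro max.mono mult_left_mono) (auto simp: C_def)
      also have "\<dots> \<le> C * Q (Suc n)" using CQ by (simp add: QS algebra_simps)
      finally show ?thesis .
    qed
  qed
  define E where "E = exp (suminf (\<lambda>i. a (Suc i)))"
  have sa: "summable (\<lambda>i. a (Suc i))" using D1b[of 0] unfolding a_def by (simp add: summable_Suc_iff)
  have Qb: "Q n \<le> E" for n
  proof -
    have "Q n \<le> (\<Prod>i<n. exp (a (Suc i)))" unfolding Q_def
      by (rule prod_mono) (use a0 in \<open>auto simp: add_nonneg_nonneg\<close>)
    also have "\<dots> = exp (\<Sum>i<n. a (Suc i))" by (simp add: exp_sum)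
    also have "\<dots> \<le> E" unfolding E_def using sum_le_suminf[OF sa, of "{..<n}"] a0 by simp
    finally show ?thesis .
  qed
  define K where "K = C * E"
  have K0': "K \<ge> 0" using C0 by (simp add: K_def E_def)
  have xb: "\<bar>x n\<bar> \<le> K" for n
  proof -
    have "\<bar>x n\<bar> \<le> \<bar>y n\<bar> + \<eta>" using \<eta>(2)[of n] abs_triangle_ineq[of "x n + r n" "- r n"] unfolding y_def by simp
    also have "\<dots> \<le> C * Q n" by (rule yb)
    also have "\<dots> \<le> K" unfolding K_def using Qb[of n] C0 by (rule mult_left_mono) 
    finally show ?thesis .
  qed
  have "Cauchy y"
  proof (rule CauchyI)
    fix \<epsilon> :: real assume \<epsilon>: "0 < \<epsilon>"
    define h where "h = \<epsilon> / 7"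
    have h: "h > 0" using \<epsilon> by (simp add: h_def)
    have "\<forall>\<^sub>F d in at_right 0. dist (\<kappa> d) 0 < h" using tendstoD[OF kap h] .
    then obtain b where b: "b > 0" "\<And>d. d > 0 \<Longrightarrow> d < b \<Longrightarrow> \<bar>\<kappa> d\<bar> < h"
      unfolding eventually_at_right_field by auto
    obtain m where m: "inverse (real (Suc m)) < min b h" using reals_Archimedean[of "min b h"] b h by auto
    define \<delta> where "\<delta> = inverse (real (Suc m))"
    have \<delta>: "\<delta> > 0" "\<delta> < h" "\<bar>\<kappa> \<delta>\<bar> < h" using m b(2)[of \<delta>] by (auto simp: \<delta>_def)
    define am where "am = \<alpha> m"
    define T where "T n = suminf am - (\<Sum>i\<le>n. am i)" for n
    have am0: "am n \<ge> 0" for n using D1a by (simp add: am_def)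
    have sam: "summable am" using D1b by (simp add: am_def)
    have Tlim: "T \<longlonglongrightarrow> 0"
    proof -
      have "(\<lambda>n. suminf am - (\<Sum>i\<le>n. am i)) \<longlonglongrightarrow> suminf am - suminf am"
        by (intro tendsto_intros summable_LIMSEQ' sam)
      then show ?thesis unfolding T_def by simp
    qed
    have T0: "T n \<ge> 0" for n using sum_le_suminf[OF sam, of "{..n}"] am0 by (simp add: T_def)
    have Trec: "T n = am (Suc n) + T (Suc n)" for n by (simp add: T_def)
    have ev: "\<forall>\<^sub>F n in sequentially. \<bar>r n\<bar> < h \<and> \<bar>K * T n\<bar> < h \<and> \<bar>c n * (if x n = 0 then 1 else 0)\<bar> < h"
    proof (intro eventually_conj)
      show "\<forall>\<^sub>F n in sequentially. \<bar>r n\<bar> < h" using tendstoD[OF rlim h] by (simp add: dist_real_def)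
      have "(\<lambda>n. K * T n) \<longlonglongrightarrow> K * 0" by (intro tendsto_intros Tlim)
      then show "\<forall>\<^sub>F n in sequentially. \<bar>K * T n\<bar> < h" using tendstoD[OF _ h] by (force simp: dist_real_def)
      show "\<forall>\<^sub>F n in sequentially. \<bar>c n * (if x n = 0 then 1 else 0)\<bar> < h"
        using tendstoD[OF A3 h] by (simp add: dist_real_def)
    qed
    then obtain N1 where N1: "\<And>n. n \<ge> N1 \<Longrightarrow> \<bar>r n\<bar> < h \<and> \<bar>K * T n\<bar> < h \<and> \<bar>c n * (if x n = 0 then 1 else 0)\<bar> < h"
      unfolding eventually_sequentially by blast
    have KT: "0 \<le> K * T n" for n using K0' T0 by simp
    have hp: "0 \<le> c n \<and> c n \<le> x n + K * am (Suc n)" if "x n > \<delta>" for n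
    proof -
      have "0 \<le> c n \<and> c n \<le> (1 + am (Suc n)) * x n"
      proof -
        have xd: "\<bar>x n\<bar> > inverse (real (Suc m))" using that \<delta> unfolding \<delta>_def by linarith
        from D1c[OF xd] have r: "0 \<le> c n / x n" "c n / x n \<le> 1 + am (Suc n)" unfolding am_def by auto
        show ?thesis using ratio_pos[OF _ r] that \<delta> by linarith
      qed
      moreover have "am (Suc n) * x n \<le> am (Suc n) * K" using xb[of n] am0 by (intro mult_left_mono) auto
      ultimately show ?thesis by (simp add: algebra_simps)
    qed
    have hn: "0 \<le> - c n \<and> - c n \<le> - x n + K * am (Suc n)" if "x n < - \<delta>" for n
    proof -
      have "0 \<le> - c n \<and> - c n \<le> (1 + am (Suc n)) * (- x n)"
      proof -
        have xd: "\<bar>x n\<bar> > inverse (real (Suc m))" using that \<delta> unfolding \<delta>_def by linarith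
        from D1c[OF xd] have r: "0 \<le> c n / x n" "c n / x n \<le> 1 + am (Suc n)" unfolding am_def by auto
        show ?thesis using ratio_neg[OF _ r] that \<delta> by linarith
      qed
      moreover have "am (Suc n) * (- x n) \<le> am (Suc n) * K" using xb[of n] am0 by (intro mult_left_mono) auto
      ultimately show ?thesis by (simp add: algebra_simps)
    qed
    have hs: "\<bar>c n\<bar> \<le> h" if "n \<ge> N1" "\<bar>x n\<bar> \<le> \<delta>" for n
    proof (cases "x n = 0")
      case True then show ?thesis using N1[OF that(1)] by simp
    next
      case False
      then have "0 < \<bar>x n\<bar>" "\<bar>x n\<bar> \<le> inverse (real (Suc m))" using that unfolding \<delta>_def by auto
      from D4[OF this] have "\<bar>c n\<bar> \<le> \<kappa> \<delta>" unfolding \<delta>_def .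
      then show ?thesis using \<delta> by linarith
    qed
    define Inv where "Inv n \<longleftrightarrow> y n + K * T n \<le> 3*h \<and> y n - K * T n \<ge> -3*h" for n
    have pres: "Inv (Suc n)" if "n \<ge> N1" "Inv n" for n
    proof -
      have rn: "\<bar>r n\<bar> \<le> h" and kt: "K * T (Suc n) \<le> h" using N1[of n] N1[of "Suc n"] that by auto
      have ys: "y (Suc n) = c n + r n" using rec[of n] by (simp add: y_def)
      have TS: "K * T n = K * am (Suc n) + K * T (Suc n)" using Trec[of n] by (simp add: algebra_simps)
      consider "x n > \<delta>" | "x n < - \<delta>" | "\<bar>x n\<bar> \<le> \<delta>" by linarith
      then show ?thesis
      proof cases
        case 1 with hp[of n] show ?thesis using that(2) rn kt KT[of "Suc n"] ys TS h
          unfolding Inv_def y_def by (simp add: abs_le_iff; linarith)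
      next
        case 2 with hn[of n] show ?thesis using that(2) rn kt KT[of "Suc n"] ys TS h
          unfolding Inv_def y_def by (simp add: abs_le_iff; linarith)
      next
        case 3 with hs[of n] show ?thesis using that rn kt KT[of "Suc n"] ys h
          unfolding Inv_def by (simp add: abs_le_iff; linarith)
      qed
    qed
    show "\<exists>M. \<forall>m\<ge>M. \<forall>n\<ge>M. norm (y m - y n) < \<epsilon>"
    proof (cases "\<exists>N\<ge>N1. Inv N")
      case True
      then obtain N where N: "N \<ge> N1" "Inv N" by blast
      have IK: "Inv (N + k)" for k
      proof (induction k)
        case 0 then show ?case using N(2) by simp
      next
        case (Suc k)
        have "N1 \<le> N + k" using N(1) by linarith
        from pres[OF this Suc.IH] show ?case by simp
      qed
      then have yb3: "\<bar>y n\<bar> \<le> 3*h" if "n \<ge> N" for n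
      proof -
        from le_Suc_ex[OF that] obtain k where k: "n = N + k" by blast
        have "Inv n" unfolding k by (rule IK)
        then have i1: "y n + K * T n \<le> 3*h" and i2: "y n - K * T n \<ge> -3*h" unfolding Inv_def by blast+
        show ?thesis unfolding abs_le_iff using i1 i2 KT[of n] by (intro conjI; linarith)
      qed
      show ?thesis
      proof (rule exI[of _ N], intro allI impI)
        fix p q assume "p \<ge> N" "q \<ge> N"
        have "norm (y p - y q) \<le> \<bar>y p\<bar> + \<bar>y q\<bar>" by (simp add: abs_triangle_ineq4)
        then show "norm (y p - y q) < \<epsilon>" using yb3[of p] yb3[of q] h \<open>p \<ge> N\<close> \<open>q \<ge> N\<close> unfolding h_def by linarith
      qed
    next
      case False
      then have noinv: "\<not> Inv n" if "n \<ge> N1" for n using that by blast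
      have cy: "convergent y"
      proof (cases "y N1 + K * T N1 > 3*h")
        case True
        show ?thesis unfolding y_def
        proof (rule side[where T=T and \<alpha>=am and N=N1 and \<eta>=h and K=K])
          show "\<And>n. x (Suc n) + r (Suc n) = c n + r n" by (rule rec)
          show "\<And>n. N1 \<le> n \<Longrightarrow> \<bar>r n\<bar> \<le> h" using N1 by force
          show "\<And>n. T n = am (Suc n) + T (Suc n)" by (rule Trec)
          show "\<And>n. N1 \<le> n \<Longrightarrow> 0 \<le> K * T n \<and> K * T n \<le> h" using N1 KT by force
          show "T \<longlonglongrightarrow> 0" by (rule Tlim)
          show "\<And>n. N1 \<le> n \<Longrightarrow> h < x n \<Longrightarrow> 0 \<le> c n \<and> c n \<le> x n + K * am (Suc n)"
            using hp \<delta> by force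
          show "\<And>n. N1 \<le> n \<Longrightarrow> \<not> (x n + r n + K * T n \<le> 3 * h \<and> - 3 * h \<le> x n + r n - K * T n)"
            using noinv unfolding Inv_def y_def by auto
          show "3 * h < x N1 + r N1 + K * T N1" using True by (simp add: y_def)
        qed
      next
        case False
        then have F: "y N1 - K * T N1 < - 3*h" using noinv[of N1] unfolding Inv_def by auto
        have "convergent (\<lambda>n. (- x n) + (- r n))"
        proof (rule side[where T=T and \<alpha>=am and N=N1 and \<eta>=h and K=K and c="\<lambda>n. - c n"])
          show "\<And>n. - x (Suc n) + - r (Suc n) = - c n + - r n" using rec by (metis add_uminus_conv_diff minus_diff_eq minus_add_distrib)
          show "\<And>n. N1 \<le> n \<Longrightarrow> \<bar>- r n\<bar> \<le> h" using N1 by force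
          show "\<And>n. T n = am (Suc n) + T (Suc n)" by (rule Trec)
          show "\<And>n. N1 \<le> n \<Longrightarrow> 0 \<le> K * T n \<and> K * T n \<le> h" using N1 KT by force
          show "T \<longlonglongrightarrow> 0" by (rule Tlim)
          show "\<And>n. N1 \<le> n \<Longrightarrow> h < - x n \<Longrightarrow> 0 \<le> - c n \<and> - c n \<le> - x n + K * am (Suc n)"
            using hn \<delta> by force
          show "\<not> (- x n + - r n + K * T n \<le> 3 * h \<and> - 3 * h \<le> - x n + - r n - K * T n)" if "N1 \<le> n" for n
          proof
            assume H: "- x n + - r n + K * T n \<le> 3 * h \<and> - 3 * h \<le> - x n + - r n - K * T n"
            have "Inv n" unfolding Inv_def y_def using H by linarith
            with noinv[OF that] show False by blast
          qed
          show "3 * h < - x N1 + - r N1 + K * T N1" using F by (simp add: y_def)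
        qed
        then show ?thesis using convergent_minus_iff[of y] by (simp add: y_def)
      qed
      show ?thesis using CauchyD[OF convergent_Cauchy[OF cy] \<epsilon>] .
    qed
  qed
  then have "convergent y" by (simp add: Cauchy_convergent_iff)
  moreover have "convergent r" using rlim unfolding convergent_def by blast
  ultimately have "convergent (\<lambda>n. y n - r n)" by (rule convergent_diff)
  then show ?thesis by (simp add: y_def)
qed

lemma det_zero:
  fixes x c :: "nat \<Rightarrow> real" and k :: "nat \<Rightarrow> nat \<Rightarrow> real"
  assumes A4: "convergent (\<lambda>n. \<Sum>i<n. x (Suc i) - c i)"
    and lim: "x \<longlonglongrightarrow> L"
    and D2a: "\<And>m n. 0 \<le> k m n \<and> k m n \<le> 1"
    and D2b: "\<And>m. \<not> summable (\<lambda>n. 1 - k m n)"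
    and D2c: "\<And>m n. inverse (real (Suc m)) < \<bar>x n\<bar> \<Longrightarrow> \<bar>x n\<bar> < real m + 2 \<Longrightarrow> 0 \<le> c n / x n \<and> c n / x n \<le> k m (Suc n)"
  shows "L = 0"
proof (rule ccontr)
  assume L0: "L \<noteq> 0"
  then have aL: "\<bar>L\<bar> > 0" by simp
  obtain m1 where m1: "inverse (real (Suc m1)) < \<bar>L\<bar>" using reals_Archimedean[OF aL] by blast
  obtain m2 where m2: "\<bar>L\<bar> < real m2" using reals_Archimedean2 by blast
  define m where "m = m1 + m2"
  define \<delta> where "\<delta> = inverse (real (Suc m))"
  have "inverse (real (Suc m)) \<le> inverse (real (Suc m1))"
    by (rule le_imp_inverse_le) (auto simp: m_def)
  then have \<delta>L: "\<delta> < \<bar>L\<bar>" using m1 unfolding \<delta>_def by linarith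
  have \<delta>0: "\<delta> > 0" by (simp add: \<delta>_def)
  have Lm: "\<bar>L\<bar> < real m + 2" using m2 by (simp add: m_def)
  define s where "s = sgn L"
  have s: "\<bar>s\<bar> = 1" "s * L = \<bar>L\<bar>" using L0 by (auto simp: s_def sgn_if)
  have l1: "(\<lambda>n. s * x n) \<longlonglongrightarrow> s * L" by (intro tendsto_intros lim)
  have l2: "(\<lambda>n. \<bar>x n\<bar>) \<longlonglongrightarrow> \<bar>L\<bar>" by (intro tendsto_intros lim)
  have "\<forall>\<^sub>F n in sequentially. s * x n > \<delta> \<and> \<bar>x n\<bar> < real m + 2"
    using order_tendstoD(1)[OF l1, of \<delta>] order_tendstoD(2)[OF l2 Lm] \<delta>L s(2)
    by (auto intro: eventually_conj)
  then obtain N where N: "\<And>n. n \<ge> N \<Longrightarrow> s * x n > \<delta> \<and> \<bar>x n\<bar> < real m + 2"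
    unfolding eventually_sequentially by blast
  define d where "d n = x n - c n" for n
  have dlow: "(1 - k m (Suc n)) * \<delta> \<le> s * d n" if "n \<ge> N" for n
  proof -
    have sx: "s * x n > \<delta>" and xu: "\<bar>x n\<bar> < real m + 2" using N[OF that] by auto
    have "s * x n \<le> \<bar>x n\<bar>" using s(1) by (metis abs_ge_self abs_mult mult_1)
    then have xd: "inverse (real (Suc m)) < \<bar>x n\<bar>" using sx by (simp add: \<delta>_def)
    then have xn: "x n \<noteq> 0" by auto
    define t where "t = c n / x n"
    have t: "0 \<le> t" "t \<le> k m (Suc n)" using D2c[OF xd xu] by (auto simp: t_def)
    have "s * d n = (1 - t) * (s * x n)" using xn by (simp add: d_def t_def algebra_simps)
    also have "\<dots> \<ge> (1 - k m (Suc n)) * \<delta>"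
      using t sx D2a[of m "Suc n"] \<delta>0 by (intro mult_mono) auto
    finally show ?thesis .
  qed
  define P where "P n = (\<Sum>i<n. x (Suc i) - c i)" for n
  have tele: "(\<Sum>i<p. d (i + N)) = x N - x (N + p) + P (N + p) - P N" for p
    by (induction p) (simp_all add: d_def P_def algebra_simps)
  obtain BX where BX: "\<And>n. \<bar>x n\<bar> \<le> BX"
    using convergent_imp_Bseq[of x] lim unfolding convergent_def by (metis BseqE real_norm_def)
  obtain BP where BP: "\<And>n. \<bar>P n\<bar> \<le> BP"
  proof -
    have "Bseq P" using A4 convergent_imp_Bseq unfolding P_def by blast
    then obtain B where "\<forall>n. norm (P n) \<le> B" using BseqE by blast
    then show ?thesis using that by auto
  qed
  define f where "f i = (1 - k m (Suc (i + N))) * \<delta>" for i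
  have "summable f"
  proof (rule summableI_nonneg_bounded)
    show "0 \<le> f n" for n using D2a[of m "Suc (n + N)"] \<delta>0 by (simp add: f_def)
    show "(\<Sum>i<n. f i) \<le> 2 * BX + 2 * BP" for n
    proof -
      have "(\<Sum>i<n. f i) \<le> (\<Sum>i<n. s * d (i + N))" unfolding f_def
        by (rule sum_mono) (rule dlow, simp)
      also have "\<dots> = s * (x N - x (N + n) + P (N + n) - P N)" by (simp add: sum_distrib_left[symmetric] tele)
      also have "\<dots> \<le> \<bar>x N - x (N + n) + P (N + n) - P N\<bar>" using s(1) by (metis abs_ge_self abs_mult mult_1)
      also have "\<dots> \<le> 2 * BX + 2 * BP" using BX[of N] BX[of "N+n"] BP[of N] BP[of "N+n"] by linarith
      finally show ?thesis .
    qed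
  qed
  then have "summable (\<lambda>i. f i / \<delta>)" by (rule summable_divide)
  then have "summable (\<lambda>i. 1 - k m (i + Suc N))" using \<delta>0 by (simp add: f_def)
  then have "summable (\<lambda>n. 1 - k m n)" by (rule summable_iff_shift[THEN iffD1])
  with D2b show False by blast
qed


theorem theorem5:
  fixes M :: "'a measure" and F :: "nat \<Rightarrow> 'a measure" and X :: "nat \<Rightarrow> 'a \<Rightarrow> real"
  assumes "prob_space M"
    and "\<And>n. subalgebra M (F n)"
    and "\<And>m n. m \<le> n \<Longrightarrow> sets (F m) \<subseteq> sets (F n)"
    and "\<And>n. X n \<in> borel_measurable (F n)"
    and "\<And>n. integrable M (X n)"
    and "condD1 M F X" and "condD4 M F X" and "condA3 M F X" and "condA4 M F X"
  shows "(AE \<omega> in M. \<exists>L::real. (\<lambda>n. X n \<omega>) \<longlonglongrightarrow> L)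
         \<and> (condD2 M F X \<longrightarrow> (AE \<omega> in M. (\<lambda>n. X n \<omega>) \<longlonglongrightarrow> 0))"
proof -
  define c where "c n \<omega> = cmean M F X n \<omega>" for n \<omega>
  have "\<forall>m. \<exists>\<alpha>::nat \<Rightarrow> real. (\<forall>n. \<alpha> n \<ge> 0) \<and> summable \<alpha> \<and>
     (\<forall>n. AE \<omega> in M. \<bar>X n \<omega>\<bar> > inverse (real (Suc m)) \<longrightarrow>
        0 \<le> c n \<omega> / X n \<omega> \<and> c n \<omega> / X n \<omega> \<le> 1 + \<alpha> (Suc n))"
  proof
    fix m
    have "inverse (real (Suc m)) > 0" by simp
    then show "\<exists>\<alpha>::nat \<Rightarrow> real. (\<forall>n. \<alpha> n \<ge> 0) \<and> summable \<alpha> \<and>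
     (\<forall>n. AE \<omega> in M. \<bar>X n \<omega>\<bar> > inverse (real (Suc m)) \<longrightarrow>
        0 \<le> c n \<omega> / X n \<omega> \<and> c n \<omega> / X n \<omega> \<le> 1 + \<alpha> (Suc n))"
      using assms(6) unfolding condD1_def c_def by blast
  qed
  from choice[OF this] obtain \<alpha> :: "nat \<Rightarrow> nat \<Rightarrow> real" where \<alpha>: "\<forall>m. (\<forall>n. \<alpha> m n \<ge> 0) \<and> summable (\<alpha> m) \<and>
     (\<forall>n. AE \<omega> in M. \<bar>X n \<omega>\<bar> > inverse (real (Suc m)) \<longrightarrow>
        0 \<le> c n \<omega> / X n \<omega> \<and> c n \<omega> / X n \<omega> \<le> 1 + \<alpha> m (Suc n))"
    by blast
  have AE1: "AE \<omega> in M. \<forall>m n. \<bar>X n \<omega>\<bar> > inverse (real (Suc m)) \<longrightarrow>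
        0 \<le> c n \<omega> / X n \<omega> \<and> c n \<omega> / X n \<omega> \<le> 1 + \<alpha> m (Suc n)"
    using \<alpha> by (simp add: AE_all_countable)
  obtain \<kappa> where kap: "(\<kappa> \<longlongrightarrow> 0) (at_right 0)"
    and k4: "\<And>\<delta> n. \<delta> > 0 \<Longrightarrow> AE \<omega> in M. 0 < \<bar>X n \<omega>\<bar> \<and> \<bar>X n \<omega>\<bar> \<le> \<delta> \<longrightarrow> \<bar>c n \<omega>\<bar> \<le> \<kappa> \<delta>"
    using assms(7) unfolding condD4_def c_def by blast
  have AE4: "AE \<omega> in M. \<forall>m n. 0 < \<bar>X n \<omega>\<bar> \<and> \<bar>X n \<omega>\<bar> \<le> inverse (real (Suc m)) \<longrightarrow>
        \<bar>c n \<omega>\<bar> \<le> \<kappa> (inverse (real (Suc m)))"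
    using k4 by (simp add: AE_all_countable)
  have AE3: "AE \<omega> in M. (\<lambda>n. c n \<omega> * (if X n \<omega> = 0 then 1 else 0)) \<longlonglongrightarrow> 0"
    using assms(8) unfolding condA3_def Uproc_def c_def by simp
  have AEA: "AE \<omega> in M. convergent (\<lambda>n. \<Sum>i<n. X (Suc i) \<omega> - c i \<omega>)"
    using assms(9) unfolding condA4_def resid_def c_def by simp
  have part1: "AE \<omega> in M. convergent (\<lambda>n. X n \<omega>)"
    using AE1 AE4 AE3 AEA
  proof eventually_elim
    case (elim \<omega>)
    show ?case
    proof (rule det_conv[where c="\<lambda>n. c n \<omega>" and \<alpha>=\<alpha> and \<kappa>=\<kappa>])
      show "convergent (\<lambda>n. \<Sum>i<n. X (Suc i) \<omega> - c i \<omega>)" by (rule elim(4))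
      show "\<And>m n. 0 \<le> \<alpha> m n" using \<alpha> by blast
      show "\<And>m. summable (\<alpha> m)" using \<alpha> by blast
      show "\<And>m n. inverse (real (Suc m)) < \<bar>X n \<omega>\<bar> \<Longrightarrow>
           0 \<le> c n \<omega> / X n \<omega> \<and> c n \<omega> / X n \<omega> \<le> 1 + \<alpha> m (Suc n)" using elim(1) by blast
      show "(\<kappa> \<longlongrightarrow> 0) (at_right 0)" by (rule kap)
      show "\<And>m n. 0 < \<bar>X n \<omega>\<bar> \<Longrightarrow> \<bar>X n \<omega>\<bar> \<le> inverse (real (Suc m)) \<Longrightarrow>
           \<bar>c n \<omega>\<bar> \<le> \<kappa> (inverse (real (Suc m)))" using elim(2) by blast
      show "(\<lambda>n. c n \<omega> * (if X n \<omega> = 0 then 1 else 0)) \<longlonglongrightarrow> 0" by (rule elim(3))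
    qed
  qed
  have part2: "AE \<omega> in M. (\<lambda>n. X n \<omega>) \<longlonglongrightarrow> 0" if D2: "condD2 M F X"
  proof -
    have "\<forall>m. \<exists>k::nat \<Rightarrow> real. (\<forall>n. 0 \<le> k n \<and> k n \<le> 1) \<and> \<not> summable (\<lambda>n. 1 - k n) \<and>
       (\<forall>n. AE \<omega> in M. inverse (real (Suc m)) < \<bar>X n \<omega>\<bar> \<and> \<bar>X n \<omega>\<bar> < real m + 2 \<longrightarrow>
          0 \<le> c n \<omega> / X n \<omega> \<and> c n \<omega> / X n \<omega> \<le> k (Suc n))"
    proof
      fix m
      have "inverse (real (Suc m)) \<le> 1" using le_imp_inverse_le[of 1 "real (Suc m)"] by simp
      then have "0 < inverse (real (Suc m)) \<and> inverse (real (Suc m)) < real m + 2" by simp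
      then show "\<exists>k::nat \<Rightarrow> real. (\<forall>n. 0 \<le> k n \<and> k n \<le> 1) \<and> \<not> summable (\<lambda>n. 1 - k n) \<and>
       (\<forall>n. AE \<omega> in M. inverse (real (Suc m)) < \<bar>X n \<omega>\<bar> \<and> \<bar>X n \<omega>\<bar> < real m + 2 \<longrightarrow>
          0 \<le> c n \<omega> / X n \<omega> \<and> c n \<omega> / X n \<omega> \<le> k (Suc n))"
        using D2 unfolding condD2_def c_def by blast
    qed
    from choice[OF this] obtain k :: "nat \<Rightarrow> nat \<Rightarrow> real" where k: "\<forall>m. (\<forall>n. 0 \<le> k m n \<and> k m n \<le> 1) \<and> \<not> summable (\<lambda>n. 1 - k m n) \<and>
       (\<forall>n. AE \<omega> in M. inverse (real (Suc m)) < \<bar>X n \<omega>\<bar> \<and> \<bar>X n \<omega>\<bar> < real m + 2 \<longrightarrow>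
          0 \<le> c n \<omega> / X n \<omega> \<and> c n \<omega> / X n \<omega> \<le> k m (Suc n))"
      by blast
    have AE2: "AE \<omega> in M. \<forall>m n. inverse (real (Suc m)) < \<bar>X n \<omega>\<bar> \<and> \<bar>X n \<omega>\<bar> < real m + 2 \<longrightarrow>
          0 \<le> c n \<omega> / X n \<omega> \<and> c n \<omega> / X n \<omega> \<le> k m (Suc n)"
      using k by (simp add: AE_all_countable)
    show ?thesis using AE2 part1 AEA
    proof eventually_elim
      case (elim \<omega>)
      then obtain L where L: "(\<lambda>n. X n \<omega>) \<longlonglongrightarrow> L" unfolding convergent_def by blast
      have "L = 0"
      proof (rule det_zero[where c="\<lambda>n. c n \<omega>" and k=k])
        show "convergent (\<lambda>n. \<Sum>i<n. X (Suc i) \<omega> - c i \<omega>)" by (rule elim(3))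
        show "(\<lambda>n. X n \<omega>) \<longlonglongrightarrow> L" by (rule L)
        show "\<And>m n. 0 \<le> k m n \<and> k m n \<le> 1" using k by blast
        show "\<And>m. \<not> summable (\<lambda>n. 1 - k m n)" using k by blast
        show "\<And>m n. inverse (real (Suc m)) < \<bar>X n \<omega>\<bar> \<Longrightarrow> \<bar>X n \<omega>\<bar> < real m + 2 \<Longrightarrow>
           0 \<le> c n \<omega> / X n \<omega> \<and> c n \<omega> / X n \<omega> \<le> k m (Suc n)" using elim(1) by blast
      qed
      then show ?case using L by simp
    qed
  qed
  show ?thesis using part1 part2 unfolding convergent_def by blast
qed

end
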